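(* Let $k\geq 1$. If $R$ is a $k$-clean ring (associative with identity), then the matrix ring $M_n(R)$ is $k$-clean for every positive integer $n$.
   Context: For a positive integer $k$, a ring $S$ is $k$-clean if every element of $S$ can be written as $e+u_1+\cdots+u_k$ with $e=e^2\in S$ and $u_1,\dots,u_k$ units of $S$. *)

theory Defs
  imports "Jordan_Normal_Form.Matrix" "HOL-Algebra.Ring"
begin

definition k_clean :: "nat \<Rightarrow> ('a, 'b) ring_scheme \<Rightarrow> bool" where
  "k_clean k S \<longleftrightarrow>
     (\<forall>x \<in> carrier S. \<exists>e u. e \<in> carrier S \<and> e \<otimes>\<^bsub>S\<^esub> e = e \<and>
        (\<forall>i<k. u i \<in> Units S) \<and>
        x = e \<oplus>\<^bsub>S\<^esub> (\<Oplus>\<^bsub>S\<^esub>i\<in>{..<k}. u i))"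

abbreviation type_ring :: "'a :: ring_1 ring" where
  "type_ring \<equiv> \<lparr> carrier = UNIV, mult = (*), one = 1, zero = 0, add = (+) \<rparr>"

end

theory Submission
  imports Defs
begin

definition sc :: "'a \<Rightarrow> 'a mat" where "sc x = mat 1 1 (\<lambda>_. x)"

lemma sc_carrier[simp]: "sc x \<in> carrier_mat 1 1"
  unfolding sc_def by auto

lemma sc_carrier'[simp]: "sc x \<in> carrier_mat (Suc 0) (Suc 0)"
  unfolding sc_def by auto

lemma sc_dims[simp]: "dim_row (sc x) = 1" "dim_col (sc x) = 1"
  unfolding sc_def by auto

lemma sc_mult[simp]: "sc (x::'a::semiring_1) * sc y = sc (x*y)"
  by (rule eq_matI, auto simp: sc_def scalar_prod_def row_def col_def)

lemma sc_add[simp]: "sc (x::'a::semiring_1) + sc y = sc (x+y)"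
  by (rule eq_matI, auto simp: sc_def)

lemma sc_one[simp]: "sc (1::'a::semiring_1) = 1\<^sub>m 1"
  by (rule eq_matI, auto simp: sc_def)

fun msum :: "nat \<Rightarrow> (nat \<Rightarrow> 'a::semiring_1 mat) \<Rightarrow> nat \<Rightarrow> 'a mat" where
  "msum n U 0 = 0\<^sub>m n n"
| "msum n U (Suc j) = U j + msum n U j"

lemma msum_carrier: "(\<And>i. i < j \<Longrightarrow> U i \<in> carrier_mat n n) \<Longrightarrow> msum n U j \<in> carrier_mat n n"
  by (induct j, auto)

definition minv :: "nat \<Rightarrow> 'a::semiring_1 mat \<Rightarrow> bool" where
  "minv n X \<longleftrightarrow> X \<in> carrier_mat n n \<and> (\<exists>Y\<in>carrier_mat n n. X*Y = 1\<^sub>m n \<and> Y*X = 1\<^sub>m n)"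

lemma minv_mult:
  assumes "minv n X" "minv n Y" shows "minv n (X*Y)"
proof -
  obtain X' where X: "X \<in> carrier_mat n n" "X' \<in> carrier_mat n n" "X*X' = 1\<^sub>m n" "X'*X = 1\<^sub>m n"
    using assms(1) unfolding minv_def by auto
  obtain Y' where Y: "Y \<in> carrier_mat n n" "Y' \<in> carrier_mat n n" "Y*Y' = 1\<^sub>m n" "Y'*Y = 1\<^sub>m n"
    using assms(2) unfolding minv_def by auto
  have "Y*(Y'*X') = Y*Y'*X'" using X Y by (metis assoc_mult_mat)
  moreover have "X*Y*(Y'*X') = X*(Y*(Y'*X'))" using X Y by (metis assoc_mult_mat mult_carrier_mat)
  ultimately have 1: "X*Y*(Y'*X') = 1\<^sub>m n" using X Y by simp
  have "X'*(X*Y) = X'*X*Y" using X Y by (metis assoc_mult_mat)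
  moreover have "Y'*X'*(X*Y) = Y'*(X'*(X*Y))" using X Y by (metis assoc_mult_mat mult_carrier_mat)
  ultimately have 2: "Y'*X'*(X*Y) = 1\<^sub>m n" using X Y by simp
  show ?thesis unfolding minv_def using 1 2 X Y by (intro conjI bexI[of _ "Y'*X'"]) auto
qed


lemma mfb:
  "A1 \<in> carrier_mat 1 1 \<Longrightarrow> B1 \<in> carrier_mat 1 m \<Longrightarrow> C1 \<in> carrier_mat m 1 \<Longrightarrow> D1 \<in> carrier_mat m m \<Longrightarrow>
   A2 \<in> carrier_mat 1 1 \<Longrightarrow> B2 \<in> carrier_mat 1 m \<Longrightarrow> C2 \<in> carrier_mat m 1 \<Longrightarrow> D2 \<in> carrier_mat m m \<Longrightarrow>
   four_block_mat A1 B1 C1 D1 * four_block_mat A2 B2 C2 D2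
  = four_block_mat (A1 * A2 + B1 * C2) (A1 * B2 + B1 * D2)
    (C1 * A2 + D1 * C2) (C1 * B2 + D1 * D2)"
  by (rule mult_four_block_mat)

lemma afb:
  "A1 \<in> carrier_mat 1 1 \<Longrightarrow> B1 \<in> carrier_mat 1 m \<Longrightarrow> C1 \<in> carrier_mat m 1 \<Longrightarrow> D1 \<in> carrier_mat m m \<Longrightarrow>
   A2 \<in> carrier_mat 1 1 \<Longrightarrow> B2 \<in> carrier_mat 1 m \<Longrightarrow> C2 \<in> carrier_mat m 1 \<Longrightarrow> D2 \<in> carrier_mat m m \<Longrightarrow>
   four_block_mat A1 B1 C1 D1 + four_block_mat A2 B2 C2 D2
  = four_block_mat (A1 + A2) (B1 + B2) (C1 + C2) (D1 + D2)"
  by (rule add_four_block_mat)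

lemma minv_block_diag:
  assumes "minv 1 P" "minv m Q"
  shows "minv (Suc m) (four_block_mat P (0\<^sub>m 1 m) (0\<^sub>m m 1) Q)"
proof -
  obtain P' where P: "P \<in> carrier_mat 1 1" "P' \<in> carrier_mat 1 1" "P*P' = 1\<^sub>m 1" "P'*P = 1\<^sub>m 1"
    using assms(1) unfolding minv_def by auto
  obtain Q' where Q: "Q \<in> carrier_mat m m" "Q' \<in> carrier_mat m m" "Q*Q' = 1\<^sub>m m" "Q'*Q = 1\<^sub>m m"
    using assms(2) unfolding minv_def by auto
  let ?B = "four_block_mat P' (0\<^sub>m 1 m) (0\<^sub>m m 1) Q'"
  have "four_block_mat P (0\<^sub>m 1 m) (0\<^sub>m m 1) Q * ?B = 1\<^sub>m (1+m)"
    by (subst mfb[where m=m], insert P Q, auto)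
  moreover have "?B * four_block_mat P (0\<^sub>m 1 m) (0\<^sub>m m 1) Q = 1\<^sub>m (1+m)"
    by (subst mfb[where m=m], insert P Q, auto)
  ultimately show ?thesis unfolding minv_def using P Q
    by (intro conjI bexI[of _ ?B]) auto
qed

lemma minv_lower:
  assumes "(C :: 'a :: ring_1 mat) \<in> carrier_mat m 1"
  shows "minv (Suc m) (four_block_mat (1\<^sub>m 1) (0\<^sub>m 1 m) C (1\<^sub>m m))"
proof -
  let ?B = "four_block_mat (1\<^sub>m 1) (0\<^sub>m 1 m) (- C) (1\<^sub>m m)"
  have "four_block_mat (1\<^sub>m 1) (0\<^sub>m 1 m) C (1\<^sub>m m) * ?B = 1\<^sub>m (1+m)"
    by (subst mfb[where m=m], insert assms, auto intro!: eq_matI)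
  moreover have "?B * four_block_mat (1\<^sub>m 1) (0\<^sub>m 1 m) C (1\<^sub>m m) = 1\<^sub>m (1+m)"
    by (subst mfb[where m=m], insert assms, auto intro!: eq_matI)
  ultimately show ?thesis unfolding minv_def using assms
    by (intro conjI bexI[of _ ?B]) auto
qed

lemma minv_upper:
  assumes "(C :: 'a :: ring_1 mat) \<in> carrier_mat 1 m"
  shows "minv (Suc m) (four_block_mat (1\<^sub>m 1) C (0\<^sub>m m 1) (1\<^sub>m m))"
proof -
  let ?B = "four_block_mat (1\<^sub>m 1) (- C) (0\<^sub>m m 1) (1\<^sub>m m)"
  have "four_block_mat (1\<^sub>m 1) C (0\<^sub>m m 1) (1\<^sub>m m) * ?B = 1\<^sub>m (1+m)"
    by (subst mfb[where m=m], insert assms, auto intro!: eq_matI)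
  moreover have "?B * four_block_mat (1\<^sub>m 1) C (0\<^sub>m m 1) (1\<^sub>m m) = 1\<^sub>m (1+m)"
    by (subst mfb[where m=m], insert assms, auto intro!: eq_matI)
  ultimately show ?thesis unfolding minv_def using assms
    by (intro conjI bexI[of _ ?B]) auto
qed


lemma main:
  fixes k :: nat
  assumes k: "k \<ge> 1"
  and R: "\<And>x::'a::ring_1. \<exists>e u. e*e = e \<and> (\<forall>i<k. \<exists>w. w * u i = 1 \<and> u i * w = 1) \<and> x = e + (\<Sum>i<k. u i)"
  shows "(A :: 'a mat) \<in> carrier_mat n n \<Longrightarrow> \<exists>E U. E \<in> carrier_mat n n \<and> E*E = E \<and> (\<forall>i<k. minv n (U i)) \<and> A = E + msum n U k"
proof (induct n arbitrary: A)
  case 0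
  have z: "A = 0\<^sub>m 0 0" using 0 by (intro eq_matI) auto
  have m0: "minv 0 (0\<^sub>m 0 0 :: 'a mat)" unfolding minv_def
    by (intro conjI bexI[of _ "0\<^sub>m 0 0"]) (auto intro!: eq_matI)
  have "msum 0 (\<lambda>_. 0\<^sub>m 0 0 :: 'a mat) k \<in> carrier_mat 0 0" by (rule msum_carrier) auto
  hence "A = 0\<^sub>m 0 0 + msum 0 (\<lambda>_. 0\<^sub>m 0 0) k" using z by (auto intro!: eq_matI)
  thus ?case using m0 by (intro exI[of _ "0\<^sub>m 0 0"] exI[of _ "\<lambda>_. 0\<^sub>m 0 0"]) (auto intro!: eq_matI)
next
  case (Suc m)
  obtain A1 A2 A3 A4 where sb: "split_block A 1 1 = (A1,A2,A3,A4)" by (metis prod_cases4)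
  have dims: "dim_row A = 1 + m" "dim_col A = 1 + m" using Suc.prems by auto
  note blk = split_block[OF sb dims]
  define a where "a = A1 $$ (0,0)"
  have A1: "A1 = sc a" using blk(1) by (intro eq_matI) (auto simp: sc_def a_def)
  obtain e u where eu: "e*e = e" "\<forall>i<k. \<exists>w. w * u i = 1 \<and> u i * w = 1" "a = e + (\<Sum>i<k. u i)"
    using R by blast
  obtain w where w: "w * u 0 = 1" "u 0 * w = 1" using eu(2) k by auto
  define W where "W = sc w"
  define X where "X = A3 * W * A2"
  have Wc: "W \<in> carrier_mat 1 1" unfolding W_def by simp
  have Xc: "X \<in> carrier_mat m m" unfolding X_def using blk Wc by auto
  have A4m: "A4 - X \<in> carrier_mat m m" using blk Xc by auto
  obtain F V where FV: "F \<in> carrier_mat m m" "F*F = F" "\<forall>i<k. minv m (V i)" "A4 - X = F + msum m V k"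
    using Suc.hyps[OF A4m] by blast
  have Vc: "\<And>i. i < k \<Longrightarrow> V i \<in> carrier_mat m m" using FV(3) unfolding minv_def by auto
  define E where "E = four_block_mat (sc e) (0\<^sub>m 1 m) (0\<^sub>m m 1) F"
  define U where "U i = (if i = 0 then four_block_mat (sc (u 0)) A2 A3 (X + V 0)
     else four_block_mat (sc (u i)) (0\<^sub>m 1 m) (0\<^sub>m m 1) (V i))" for i
  show ?case
  proof (intro exI conjI)
    show "E \<in> carrier_mat (Suc m) (Suc m)" unfolding E_def using FV by auto
    show "E*E = E" unfolding E_def
      by (subst mfb[where m=m], insert FV eu, auto)
    show "\<forall>i<k. minv (Suc m) (U i)"
    proof (intro allI impI)
      fix i assume i: "i < k"
      show "minv (Suc m) (U i)"
      proof (cases "i = 0")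
        case False
        obtain wi where wi: "wi * u i = 1" "u i * wi = 1" using eu(2) i by auto
        have "minv 1 (sc (u i))" unfolding minv_def
          using wi by (intro conjI bexI[of _ "sc wi"]) auto
        from minv_block_diag[OF this FV(3)[rule_format, OF i]]
        show ?thesis unfolding U_def using False by simp
      next
        case True
        define L where "L = four_block_mat (1\<^sub>m 1) (0\<^sub>m 1 m) (A3 * W) (1\<^sub>m m)"
        define D where "D = four_block_mat (sc (u 0)) (0\<^sub>m 1 m) (0\<^sub>m m 1) (V 0)"
        define T where "T = four_block_mat (1\<^sub>m 1) (W * A2) (0\<^sub>m m 1) (1\<^sub>m m)"
        have mu0: "minv 1 (sc (u 0))" unfolding minv_def
          using w by (intro conjI bexI[of _ "sc w"]) auto
        have k0: "0 < k" using k by auto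
        from minv_block_diag[OF mu0 FV(3)[rule_format, OF k0]]
        have mD: "minv (Suc m) D" unfolding D_def .
        have "A3 * W \<in> carrier_mat m 1" using blk Wc by auto
        from minv_lower[OF this] have mL: "minv (Suc m) L" unfolding L_def .
        have "W * A2 \<in> carrier_mat 1 m" using blk Wc by auto
        from minv_upper[OF this] have mT: "minv (Suc m) T" unfolding T_def .
        have V0: "V 0 \<in> carrier_mat m m" using Vc k by auto
        have Wu: "W * sc (u 0) = 1\<^sub>m 1" "sc (u 0) * W = 1\<^sub>m 1" unfolding W_def using w by auto
        have LD: "L * D = four_block_mat (sc (u 0)) (0\<^sub>m 1 m) (A3 * W * sc (u 0)) (V 0)"
          unfolding L_def D_def by (subst mfb[where m=m], insert blk Wc V0, auto)
        have "A3 * W * sc (u 0) = A3 * (W * sc (u 0))"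
          by (rule assoc_mult_mat[OF blk(3) Wc sc_carrier])
        hence c1: "A3 * W * sc (u 0) = A3" using blk Wu by simp
        have "sc (u 0) * W * A2 = sc (u 0) * (W * A2)"
          by (rule assoc_mult_mat[OF sc_carrier Wc blk(2)])
        hence c2: "sc (u 0) * (W * A2) = A2" using blk Wu by simp
        have "L * D * T = U 0" unfolding LD c1 T_def U_def X_def
          by (subst mfb[where m=m], insert blk Wc V0 c2, auto)
        thus ?thesis using True minv_mult[OF minv_mult[OF mL mD] mT] by simp
      qed
    qed
    have Uc: "U i \<in> carrier_mat (1+m) (1+m)" if "i < k" for i
      using that Vc[of i] blk Xc unfolding U_def carrier_mat_def by auto
    have Mc: "msum m V j \<in> carrier_mat m m" if "j \<le> k" for j
      by (rule msum_carrier) (use that Vc in auto)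
    have sumU: "Suc j \<le> k \<Longrightarrow> msum (Suc m) U (Suc j) =
       four_block_mat (sc (\<Sum>i<Suc j. u i)) A2 A3 (X + msum m V (Suc j))" for j
    proof (induct j)
      case 0
      have "U 0 \<in> carrier_mat (Suc m) (Suc m)" using Uc[of 0] 0 by auto
      moreover have "V 0 \<in> carrier_mat m m" using Vc 0 by auto
      ultimately show ?case by (simp add: U_def)
    next
      case (Suc j)
      have IH: "msum (Suc m) U (Suc j) = four_block_mat (sc (\<Sum>i<Suc j. u i)) A2 A3 (X + msum m V (Suc j))"
        using Suc by auto
      have Vs: "V (Suc j) \<in> carrier_mat m m" using Vc Suc by auto
      have Ms: "msum m V (Suc j) \<in> carrier_mat m m" using Mc Suc by auto
      have "msum (Suc m) U (Suc (Suc j)) = U (Suc j) + msum (Suc m) U (Suc j)" by simp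
      also have "\<dots> = four_block_mat (sc (u (Suc j))) (0\<^sub>m 1 m) (0\<^sub>m m 1) (V (Suc j)) +
          four_block_mat (sc (\<Sum>i<Suc j. u i)) A2 A3 (X + msum m V (Suc j))"
        unfolding IH U_def by simp
      also have "\<dots> = four_block_mat (sc (u (Suc j)) + sc (\<Sum>i<Suc j. u i)) (0\<^sub>m 1 m + A2) (0\<^sub>m m 1 + A3)
           (V (Suc j) + (X + msum m V (Suc j)))"
        by (rule afb) (use blk Vs Ms Xc in auto)
      also have "\<dots> = four_block_mat (sc (\<Sum>i<Suc (Suc j). u i)) A2 A3 (X + msum m V (Suc (Suc j)))"
      proof (rule cong_four_block_mat)
        show "sc (u (Suc j)) + sc (\<Sum>i<Suc j. u i) = sc (\<Sum>i<Suc (Suc j). u i)"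
          by (simp add: add.commute)
        show "0\<^sub>m 1 m + A2 = A2" using blk by simp
        show "0\<^sub>m m 1 + A3 = A3" using blk by simp
        show "V (Suc j) + (X + msum m V (Suc j)) = X + msum m V (Suc (Suc j))"
          using Vs Ms Xc by (intro eq_matI) (auto simp: algebra_simps)
      qed
      finally show ?case .
    qed
    obtain j where kj: "k = Suc j" using k by (cases k) auto
    have Mk: "msum m V k \<in> carrier_mat m m" using Mc by auto
    have "E + msum (Suc m) U k = E + four_block_mat (sc (\<Sum>i<k. u i)) A2 A3 (X + msum m V k)"
      using sumU[of j] kj by simp
    also have "\<dots> = four_block_mat (sc e + sc (\<Sum>i<k. u i)) (0\<^sub>m 1 m + A2) (0\<^sub>m m 1 + A3) (F + (X + msum m V k))"
      unfolding E_def by (rule afb) (use blk FV Mk Xc in auto)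
    also have "\<dots> = four_block_mat A1 A2 A3 A4"
    proof (rule cong_four_block_mat)
      show "sc e + sc (\<Sum>i<k. u i) = A1" using A1 eu by simp
      show "0\<^sub>m 1 m + A2 = A2" using blk by simp
      show "0\<^sub>m m 1 + A3 = A3" using blk by simp
      show "F + (X + msum m V k) = A4"
      proof (rule eq_matI)
        fix i j assume ij: "i < dim_row A4" "j < dim_col A4"
        have h0: "(A4 - X) $$ (i,j) = (F + msum m V k) $$ (i,j)" unfolding FV(4) by (rule refl)
        have h: "A4 $$ (i,j) - X $$ (i,j) = F $$ (i,j) + msum m V k $$ (i,j)"
          using h0 ij blk Xc FV(1) Mk by simp
        have "(F + (X + msum m V k)) $$ (i, j) = F $$ (i,j) + (X $$ (i,j) + msum m V k $$ (i,j))"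
          using ij blk Xc FV Mk by simp
        thus "(F + (X + msum m V k)) $$ (i, j) = A4 $$ (i, j)"
          using h by (metis add.commute add.left_commute diff_eq_eq)
      qed (use blk Xc FV Mk in auto)
    qed
    finally show "A = E + msum (Suc m) U k" using blk by simp
  qed
qed


lemma type_ring_am: "abelian_monoid (type_ring :: 'a::ring_1 ring)"
  by (unfold_locales) (auto simp: add.assoc add.commute)

lemma finsum_type: "finsum (type_ring :: 'a::ring_1 ring) (f :: nat \<Rightarrow> 'a) {..<j} = (\<Sum>i<j. f i)"
proof (induct j)
  case 0
  show ?case using abelian_monoid.finsum_empty[OF type_ring_am] by simp
next
  case (Suc j)
  have "finsum (type_ring :: 'a::ring_1 ring) f {..<Suc j} = f j + finsum (type_ring :: 'a::ring_1 ring) f {..<j}"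
    unfolding lessThan_Suc
    by (subst abelian_monoid.finsum_insert[OF type_ring_am]) auto
  thus ?case using Suc by (simp add: add.commute)
qed

lemma finsum_mat: "(\<And>i. i < j \<Longrightarrow> U i \<in> carrier_mat n n) \<Longrightarrow>
  finsum (ring_mat TYPE('a::ring_1) n ()) U {..<j} = msum n U j"
proof (induct j)
  case 0
  interpret semiring "ring_mat TYPE('a) n ()" by (rule semiring_mat)
  show ?case by (simp add: ring_mat_simps)
next
  case (Suc j)
  interpret semiring "ring_mat TYPE('a) n ()" by (rule semiring_mat)
  have "finsum (ring_mat TYPE('a) n ()) U {..<Suc j} = U j \<oplus>\<^bsub>ring_mat TYPE('a) n ()\<^esub> finsum (ring_mat TYPE('a) n ()) U {..<j}"
    unfolding lessThan_Suc
    by (subst finsum_insert) (use Suc.prems in \<open>auto simp: ring_mat_simps\<close>)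
  thus ?case using Suc by (simp add: ring_mat_simps)
qed

theorem corollary6:
  fixes k n :: nat
  assumes "k \<ge> 1"
    and "k_clean k (type_ring :: 'a :: ring_1 ring)"
    and "n \<ge> 1"
  shows "k_clean k (ring_mat TYPE('a) n ())"
proof -
  have R: "\<exists>e u. e*e = e \<and> (\<forall>i<k. \<exists>w. w * u i = 1 \<and> u i * w = 1) \<and> x = e + (\<Sum>i<k. u i)"
    for x :: 'a
  proof -
    have xc: "x \<in> carrier (type_ring :: 'a ring)" by simp
    obtain e u where eu: "e * e = e" "\<forall>i<k. u i \<in> Units (type_ring :: 'a ring)"
      "x = e + finsum (type_ring :: 'a ring) u {..<k}"
      using assms(2)[unfolded k_clean_def, rule_format, OF xc] by auto
    have "\<forall>i<k. \<exists>w. w * u i = 1 \<and> u i * w = 1" using eu(2) unfolding Units_def by auto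
    thus ?thesis using eu(1,3) finsum_type by metis
  qed
  show ?thesis unfolding k_clean_def
  proof
    fix A assume A: "A \<in> carrier (ring_mat TYPE('a) n ())"
    obtain E U where EU: "E \<in> carrier_mat n n" "E*E = E" "\<forall>i<k. minv n (U i)" "A = E + msum n U k"
      using main[OF assms(1) R, of A n] A by (auto simp: ring_mat_simps)
    have Uc: "\<And>i. i < k \<Longrightarrow> U i \<in> carrier_mat n n" using EU(3) unfolding minv_def by auto
    have "\<forall>i<k. U i \<in> Units (ring_mat TYPE('a) n ())"
      using EU(3) unfolding minv_def Units_def by (auto simp: ring_mat_simps)
    thus "\<exists>e u. e \<in> carrier (ring_mat TYPE('a) n ()) \<and> e \<otimes>\<^bsub>ring_mat TYPE('a) n ()\<^esub> e = e \<and>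
        (\<forall>i<k. u i \<in> Units (ring_mat TYPE('a) n ())) \<and>
        A = e \<oplus>\<^bsub>ring_mat TYPE('a) n ()\<^esub> (\<Oplus>\<^bsub>ring_mat TYPE('a) n ()\<^esub>i\<in>{..<k}. u i)"
      using EU finsum_mat[OF Uc] by (intro exI[of _ E] exI[of _ U]) (auto simp: ring_mat_simps)
  qed
qed

end
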